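(* Let $A \in\mathbb{C}^{n\times n}$, and fix $A^-\in A\{1\}$ and $A^{GD}\in A\{GD\}$. Then $A^{1GD}=A^-AA^{GD}$ is the unique matrix $X\in\mathbb{C}^{n\times n}$ satisfying $$AX = P_{R(A),N(AA^{GD})} \quad\text{and}\quad R(X)\subseteq R(A^{-}A).$$
   Context: For $A\in\mathbb{C}^{n\times n}$, $ind(A)$ is the smallest nonnegative integer $k$ with $\mathrm{rank}(A^k)=\mathrm{rank}(A^{k+1})$. $A\{1\}$ is the set of matrices $X$ with $AXA=A$. With $k=ind(A)$, $A\{GD\}$ is the set of G-Drazin inverses of $A$: matrices $X$ with $AXA=A$, $XA^{k+1}=A^k$, $A^{k+1}X=A^k$. $R(\cdot)$, $N(\cdot)$ denote range and null space; $P_{S,T}$ is the projector onto $S$ along $T$. *)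

theory Defs
  imports "HOL-Analysis.Analysis"
begin

text \<open>Matrix power with respect to matrix multiplication (the built-in power on
  vector types is componentwise, so we define the matrix power explicitly).\<close>
fun matpow :: "'a::semiring_1^'n^'n \<Rightarrow> nat \<Rightarrow> 'a^'n^'n" where
  "matpow A 0 = mat 1"
| "matpow A (Suc k) = A ** matpow A k"

definition ind :: "'a::field^'n^'n \<Rightarrow> nat" where
  "ind A = (LEAST k. rank (matpow A k) = rank (matpow A (Suc k)))"

definition mat_range :: "'a::semiring_1^'n^'m \<Rightarrow> ('a^'m) set" where
  "mat_range A = {A *v x | x. True}"

definition mat_null :: "'a::semiring_1^'n^'m \<Rightarrow> ('a^'n) set" where
  "mat_null A = {x. A *v x = 0}"

definition inner_inverses :: "'a::semiring_1^'n^'n \<Rightarrow> ('a^'n^'n) set" where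
  "inner_inverses A = {X. A ** X ** A = A}"

definition gdrazin_inverses :: "'a::field^'n^'n \<Rightarrow> ('a^'n^'n) set" where
  "gdrazin_inverses A = {X. A ** X ** A = A
      \<and> X ** matpow A (Suc (ind A)) = matpow A (ind A)
      \<and> matpow A (Suc (ind A)) ** X = matpow A (ind A)}"

definition is_projector_onto_along :: "'a::semiring_1^'n^'n \<Rightarrow> ('a^'n) set \<Rightarrow> ('a^'n) set \<Rightarrow> bool" where
  "is_projector_onto_along P S T \<longleftrightarrow> P ** P = P \<and> mat_range P = S \<and> mat_null P = T"

end

theory Submission
  imports Defs
begin

theorem theorem3p4:
  fixes A Am Agd :: "complex^'n^'n"
  assumes "Am \<in> inner_inverses A"
      and "Agd \<in> gdrazin_inverses A"
  shows "\<forall>X :: complex^'n^'n.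
           (is_projector_onto_along (A ** X) (mat_range A) (mat_null (A ** Agd))
            \<and> mat_range X \<subseteq> mat_range (Am ** A))
           \<longleftrightarrow> X = Am ** A ** Agd"
proof
  fix X :: "complex^'n^'n"
  have AmA: "A ** Am ** A = A" using assms(1) by (simp add: inner_inverses_def)
  have AGA: "A ** Agd ** A = A" using assms(2) by (simp add: gdrazin_inverses_def)
  have Gidem: "(A ** Agd) ** (A ** Agd) = A ** Agd"
    by (metis AGA matrix_mul_assoc)
  have RG: "mat_range (A ** Agd) = mat_range A"
  proof
    show "mat_range (A ** Agd) \<subseteq> mat_range A"
      unfolding mat_range_def by (auto simp: matrix_vector_mul_assoc[symmetric])
    show "mat_range A \<subseteq> mat_range (A ** Agd)"
    proof
      fix y assume "y \<in> mat_range A"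
      then obtain x where "y = A *v x" unfolding mat_range_def by auto
      then have "y = (A ** Agd) *v (A *v x)"
        by (metis AGA matrix_vector_mul_assoc)
      then show "y \<in> mat_range (A ** Agd)" unfolding mat_range_def by auto
    qed
  qed
  show "(is_projector_onto_along (A ** X) (mat_range A) (mat_null (A ** Agd))
            \<and> mat_range X \<subseteq> mat_range (Am ** A)) \<longleftrightarrow> X = Am ** A ** Agd"
  proof
    assume H: "is_projector_onto_along (A ** X) (mat_range A) (mat_null (A ** Agd))
            \<and> mat_range X \<subseteq> mat_range (Am ** A)"
    have Pid: "(A ** X) ** (A ** X) = A ** X" and PR: "mat_range (A ** X) = mat_range A"
      and PN: "mat_null (A ** X) = mat_null (A ** Agd)" and XR: "mat_range X \<subseteq> mat_range (Am ** A)"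
      using H by (auto simp: is_projector_onto_along_def)
    have AXeq: "A ** X = A ** Agd"
    proof (subst matrix_eq, intro allI)
      fix x :: "complex^'n"
      have "(A ** Agd) *v x \<in> mat_range (A ** X)" using PR RG unfolding mat_range_def by auto
      then obtain z where z: "(A ** Agd) *v x = (A ** X) *v z" unfolding mat_range_def by auto
      have 1: "(A ** X) *v ((A ** Agd) *v x) = (A ** Agd) *v x"
        by (metis z Pid matrix_vector_mul_assoc)
      have "(A ** Agd) *v (x - (A ** Agd) *v x) = 0"
        by (metis Gidem matrix_vector_mul_assoc matrix_vector_mult_diff_distrib diff_self)
      then have "x - (A ** Agd) *v x \<in> mat_null (A ** X)" using PN unfolding mat_null_def by auto
      then have 2: "(A ** X) *v (x - (A ** Agd) *v x) = 0" unfolding mat_null_def by auto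
      show "(A ** X) *v x = (A ** Agd) *v x"
        using 1 2 by (simp add: matrix_vector_mult_diff_distrib)
    qed
    have "X = Am ** A ** X"
    proof (subst matrix_eq, intro allI)
      fix x :: "complex^'n"
      have "X *v x \<in> mat_range (Am ** A)" using XR unfolding mat_range_def by auto
      then obtain y where y: "X *v x = (Am ** A) *v y" unfolding mat_range_def by auto
      have "(Am ** A) ** (Am ** A) = Am ** A" by (metis AmA matrix_mul_assoc)
      then have "(Am ** A) *v (X *v x) = X *v x" by (metis y matrix_vector_mul_assoc)
      then show "X *v x = (Am ** A ** X) *v x" by (simp add: matrix_vector_mul_assoc)
    qed
    also have "\<dots> = Am ** A ** Agd" using AXeq by (metis matrix_mul_assoc)
    finally show "X = Am ** A ** Agd" .
  next
    assume X: "X = Am ** A ** Agd"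
    have AX: "A ** X = A ** Agd" unfolding X by (metis AmA matrix_mul_assoc)
    have "mat_range X \<subseteq> mat_range (Am ** A)"
      unfolding X mat_range_def by (auto simp: matrix_vector_mul_assoc[symmetric])
    then show "is_projector_onto_along (A ** X) (mat_range A) (mat_null (A ** Agd))
            \<and> mat_range X \<subseteq> mat_range (Am ** A)"
      using AX Gidem RG by (simp add: is_projector_onto_along_def)
  qed
qed

end
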